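(* Let $n \ge 2$ and let $\mathcal{P} = \langle x, y \mid x^n y^{-2}, R\rangle$, $R \in F(x,y)$, be a regular presentation of $Q_{4n}$. Then there exist an integer $k \ge 0$ and nonzero integers $n_1, m_1, \dots, n_k, m_k$ such that $\mathcal{P} \simeq_Q \mathcal{P}_n(n_1,\dots,n_k;m_1,\dots,m_k)$.
   Context: $Q_{4n}$ is identified with $\langle x, y \mid x^n y^{-2}, xyxy^{-1} \rangle$ and $F(x,y)$ is the free group on $x,y$. A presentation $\langle x, y \mid x^n y^{-2}, R\rangle$ is regular if the map $x \mapsto x$, $y \mapsto y$ induces a group isomorphism from the group it presents to $Q_{4n}$. For integers $k\ge 0$, $n_1,\dots,n_k,m_1,\dots,m_k$, with $n_{k+1} = 1 - \sum_{i=1}^k n_i$, $m_{k+1} = 1 - \sum_{i=1}^k m_i$, $\mathcal{P}_n(n_1,\dots,n_k;m_1,\dots,m_k) = \langle x, y \mid x^n y^{-2},\ x^{n_1} y x^{m_1} y^{-1} \cdots x^{n_{k+1}} y x^{m_{k+1}} y^{-1} \rangle$. Two finite presentations on the same generators are $Q$-equivalent ($\simeq_Q$) if related by a finite sequence of the moves: replace a relator $r_i$ by $r_ir_j$ ($j\neq i$); replace $r_i$ by $r_i^{-1}$; replace $r_i$ by $wr_iw^{-1}$ for some $w$ in the free group on the generators. *)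

theory Defs
  imports "HOL-Algebra.Algebra"
begin

datatype gen = GX | GY

type_synonym letter = "gen \<times> bool"   \<comment> \<open>True = generator, False = its inverse\<close>
type_synonym word = "letter list"

definition inv_letter :: "letter \<Rightarrow> letter" where
  "inv_letter l = (fst l, \<not> snd l)"

fun red :: "word \<Rightarrow> word" where
  "red [] = []"
| "red (a # w) = (case red w of [] \<Rightarrow> [a]
                   | b # u \<Rightarrow> (if b = inv_letter a then u else a # b # u))"

fun reduced :: "word \<Rightarrow> bool" where
  "reduced [] = True"
| "reduced [a] = True"
| "reduced (a # b # w) = (b \<noteq> inv_letter a \<and> reduced (b # w))"

definition wmult :: "word \<Rightarrow> word \<Rightarrow> word" where
  "wmult u v = red (u @ v)"

definition winv :: "word \<Rightarrow> word" where
  "winv w = rev (map inv_letter w)"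

definition FG :: "word monoid" where
  "FG = \<lparr>carrier = {w. reduced w}, monoid.mult = wmult, one = []\<rparr>"

definition normal_closure :: "('a, 'b) monoid_scheme \<Rightarrow> 'a set \<Rightarrow> 'a set" where
  "normal_closure G S = \<Inter>{N. N \<lhd> G \<and> S \<subseteq> N}"

definition pres_group :: "word list \<Rightarrow> word set monoid" where
  "pres_group rels = FG Mod (normal_closure FG (set rels))"

definition gx :: word where "gx = [(GX, True)]"
definition gy :: word where "gy = [(GY, True)]"

definition xpow :: "int \<Rightarrow> word" where
  "xpow a = (if a \<ge> 0 then replicate (nat a) (GX, True) else replicate (nat (- a)) (GX, False))"

definition rel0 :: "nat \<Rightarrow> word" where
  "rel0 n = replicate n (GX, True) @ [(GY, False), (GY, False)]"

definition Q_rels :: "nat \<Rightarrow> word list" where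
  "Q_rels n = [rel0 n, [(GX, True), (GY, True), (GX, True), (GY, False)]]"

definition regular :: "nat \<Rightarrow> word \<Rightarrow> bool" where
  "regular n R \<longleftrightarrow>
     (let NP = normal_closure FG (set [rel0 n, R]);
          NQ = normal_closure FG (set (Q_rels n))
      in \<exists>h \<in> iso (pres_group [rel0 n, R]) (pres_group (Q_rels n)).
           h (NP #>\<^bsub>FG\<^esub> gx) = NQ #>\<^bsub>FG\<^esub> gx \<and>
           h (NP #>\<^bsub>FG\<^esub> gy) = NQ #>\<^bsub>FG\<^esub> gy)"

definition Pn_rel :: "int list \<Rightarrow> int list \<Rightarrow> word" where
  "Pn_rel ns ms =
     (let ns' = ns @ [1 - sum_list ns]; ms' = ms @ [1 - sum_list ms]
      in red (concat (map (\<lambda>(a, b). xpow a @ [(GY, True)] @ xpow b @ [(GY, False)])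
                          (zip ns' ms'))))"

definition Pn :: "nat \<Rightarrow> int list \<Rightarrow> int list \<Rightarrow> word list" where
  "Pn n ns ms = [rel0 n, Pn_rel ns ms]"

definition Q_move :: "word list \<Rightarrow> word list \<Rightarrow> bool" where
  "Q_move rs rs' \<longleftrightarrow>
     (\<exists>i j. i < length rs \<and> j < length rs \<and> i \<noteq> j \<and> rs' = rs[i := wmult (rs ! i) (rs ! j)])
   \<or> (\<exists>i. i < length rs \<and> rs' = rs[i := winv (rs ! i)])
   \<or> (\<exists>i w. i < length rs \<and> w \<in> carrier FG \<and> rs' = rs[i := wmult (wmult w (rs ! i)) (winv w)])"

definition Q_equiv :: "word list \<Rightarrow> word list \<Rightarrow> bool" (infix \<open>\<simeq>\<^sub>Q\<close> 50) where
  "Q_equiv P P' \<longleftrightarrow> (\<lambda>a b. Q_move a b \<or> Q_move b a)\<^sup>*\<^sup>* P P'"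

end

theory Submission
  imports Defs
begin


definition cancel :: "letter \<Rightarrow> word \<Rightarrow> word" where
  "cancel a w = (case w of [] \<Rightarrow> [a] | b # u \<Rightarrow> (if b = inv_letter a then u else a # b # u))"

lemma red_Cons: "red (a # w) = cancel a (red w)"
  by (simp add: cancel_def)

declare red.simps(2)[simp del]

lemma inv_inv_letter[simp]: "inv_letter (inv_letter a) = a"
  by (simp add: inv_letter_def)

lemma inv_letter_neq[simp]: "inv_letter a \<noteq> a"
  by (cases a) (simp add: inv_letter_def)

lemma reduced_Cons: "reduced (a # w) \<longleftrightarrow> reduced w \<and> (w = [] \<or> hd w \<noteq> inv_letter a)"
  by (cases w) auto

lemma reduced_cancel: "reduced w \<Longrightarrow> reduced (cancel a w)"
  by (cases w) (auto simp: cancel_def reduced_Cons)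

lemma reduced_red: "reduced (red w)"
  by (induction w) (auto simp: red_Cons reduced_cancel)

lemma red_reduced: "reduced w \<Longrightarrow> red w = w"
proof (induction w)
  case Nil thus ?case by simp
next
  case (Cons a w)
  then show ?case by (cases w) (auto simp: red_Cons cancel_def reduced_Cons)
qed

lemma red_red[simp]: "red (red w) = red w"
  by (simp add: red_reduced reduced_red)

lemma cancel_cancel_inv: "reduced s \<Longrightarrow> cancel a (cancel (inv_letter a) s) = s"
  apply (cases s)
   apply (simp add: cancel_def)
  apply (auto simp: cancel_def reduced_Cons split: list.splits)
  done

lemma red_append_right: "red (u @ v) = red (u @ red v)"
  by (induction u) (auto simp: red_Cons)

lemma red_cancel_append: "reduced r \<Longrightarrow> red (cancel a r @ v) = cancel a (red (r @ v))"
proof (cases r)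
  case Nil thus ?thesis by (simp add: cancel_def red_Cons)
next
  case (Cons b u)
  assume r: "reduced r"
  show ?thesis
  proof (cases "b = inv_letter a")
    case True
    have "cancel a (red (r @ v)) = cancel a (cancel (inv_letter a) (red (u @ v)))"
      using Cons True by (simp add: red_Cons)
    also have "\<dots> = red (u @ v)" by (rule cancel_cancel_inv[OF reduced_red])
    finally show ?thesis using Cons True by (simp add: cancel_def)
  next
    case False
    then show ?thesis using Cons by (simp add: cancel_def red_Cons)
  qed
qed

lemma red_append_left: "red (u @ v) = red (red u @ v)"
proof (induction u)
  case Nil thus ?case by simp
next
  case (Cons a u)
  have "red (red (a # u) @ v) = red (cancel a (red u) @ v)" by (simp add: red_Cons)
  also have "\<dots> = cancel a (red (red u @ v))" by (rule red_cancel_append[OF reduced_red])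
  also have "\<dots> = red ((a # u) @ v)" using Cons by (simp add: red_Cons)
  finally show ?case by simp
qed

lemma red_inv_cancel: "red (inv_letter a # a # w) = red w"
  using cancel_cancel_inv[OF reduced_red, of "inv_letter a" w] by (simp add: red_Cons)

lemma red_winv_left: "red (winv w @ w) = []"
proof (induction w)
  case Nil thus ?case by (simp add: winv_def)
next
  case (Cons a w)
  have "red (winv (a # w) @ a # w) = red (winv w @ (inv_letter a # a # w))"
    by (simp add: winv_def)
  also have "\<dots> = red (winv w @ red (inv_letter a # a # w))" by (rule red_append_right)
  also have "\<dots> = red (winv w @ w)" by (metis red_inv_cancel red_append_right)
  finally show ?case using Cons by simp
qed

lemma winv_winv[simp]: "winv (winv w) = w"
  by (simp add: winv_def rev_map comp_def)

lemma red_winv_right: "red (w @ winv w) = []"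
  using red_winv_left[of "winv w"] by simp

lemma carrier_FG[simp]: "carrier FG = {w. reduced w}"
  by (simp add: FG_def)
lemma mult_FG[simp]: "x \<otimes>\<^bsub>FG\<^esub> y = red (x @ y)"
  by (simp add: FG_def wmult_def)
lemma one_FG[simp]: "\<one>\<^bsub>FG\<^esub> = []"
  by (simp add: FG_def)

lemma group_FG: "group FG"
proof (rule groupI)
  fix x y z :: word
  show "x \<otimes>\<^bsub>FG\<^esub> y \<otimes>\<^bsub>FG\<^esub> z = x \<otimes>\<^bsub>FG\<^esub> (y \<otimes>\<^bsub>FG\<^esub> z)"
    by (simp, metis append_assoc red_append_left red_append_right)
next
  fix x assume "x \<in> carrier FG"
  then show "\<one>\<^bsub>FG\<^esub> \<otimes>\<^bsub>FG\<^esub> x = x" by (simp add: red_reduced)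
  show "\<exists>y\<in>carrier FG. y \<otimes>\<^bsub>FG\<^esub> x = \<one>\<^bsub>FG\<^esub>"
    by (rule bexI[of _ "red (winv x)"]) (auto simp: reduced_red red_winv_left red_append_left[symmetric])
qed (auto simp: reduced_red)

interpretation F: group FG by (rule group_FG)

lemma inv_FG: "w \<in> carrier FG \<Longrightarrow> inv\<^bsub>FG\<^esub> w = red (winv w)"
  by (rule F.inv_equality) (auto simp: reduced_red red_winv_left red_append_left[symmetric])

lemma inv_letter_eq_iff[simp]: "inv_letter x = inv_letter y \<longleftrightarrow> x = y"
  by (metis inv_inv_letter)

lemma winv_Nil_iff[simp]: "winv w = [] \<longleftrightarrow> w = []"
  by (simp add: winv_def)

lemma reduced_snoc: "reduced (u @ [a]) \<longleftrightarrow> reduced u \<and> (u = [] \<or> a \<noteq> inv_letter (last u))"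
  by (induction u rule: reduced.induct) (auto simp: inv_letter_def)

lemma reduced_winv: "reduced w \<Longrightarrow> reduced (winv w)"
proof (induction w)
  case Nil thus ?case by (simp add: winv_def)
next
  case (Cons a w)
  then have "reduced w" by (simp add: reduced_Cons)
  have w: "winv (a # w) = winv w @ [inv_letter a]" by (simp add: winv_def)
  have "w \<noteq> [] \<Longrightarrow> last (winv w) = inv_letter (hd w)"
    by (cases w) (auto simp: winv_def)
  with Cons show ?case
    unfolding w reduced_snoc by (cases w) (auto simp: reduced_Cons)
qed

lemma inv_FG': "w \<in> carrier FG \<Longrightarrow> inv\<^bsub>FG\<^esub> w = winv w"
  by (simp add: inv_FG red_reduced reduced_winv)

lemma wmult_FG: "wmult u v = u \<otimes>\<^bsub>FG\<^esub> v"
  by (simp add: wmult_def)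


lemma (in group) nc_normal:
  assumes "S \<subseteq> carrier G" shows "normal_closure G S \<lhd> G"
proof -
  let ?A = "{N. N \<lhd> G \<and> S \<subseteq> N}"
  have "carrier G \<in> ?A" using assms normal_self by simp
  then have ne: "?A \<noteq> {}" by blast
  have sg: "subgroup (\<Inter>?A) G"
  proof (rule subgroups_Inter)
    fix H assume "H \<in> ?A" then show "subgroup H G" by (simp add: normal_imp_subgroup)
  qed (rule ne)
  have cl: "\<forall>x\<in>carrier G. \<forall>h\<in>\<Inter>?A. x \<otimes> h \<otimes> inv x \<in> \<Inter>?A"
  proof (intro ballI)
    fix x h assume x: "x \<in> carrier G" and h: "h \<in> \<Inter>?A"
    show "x \<otimes> h \<otimes> inv x \<in> \<Inter>?A"
    proof
      fix N assume N: "N \<in> ?A"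
      with h have "h \<in> N" by blast
      with N x show "x \<otimes> h \<otimes> inv x \<in> N" by (simp add: normal.inv_op_closed2)
    qed
  qed
  have "\<Inter>?A \<lhd> G" by (rule normal_inv_iff[THEN iffD2]) (rule conjI[OF sg cl])
  then show ?thesis unfolding normal_closure_def .
qed

lemma nc_sub: "S \<subseteq> normal_closure G S"
  unfolding normal_closure_def by blast

lemma nc_least: "N \<lhd> G \<Longrightarrow> S \<subseteq> N \<Longrightarrow> normal_closure G S \<subseteq> N"
  unfolding normal_closure_def by blast

section \<open>Q-equivalence basics\<close>

declare mult_FG[simp del] one_FG[simp del] carrier_FG[simp del]

lemma Qe_refl: "P \<simeq>\<^sub>Q P" by (simp add: Q_equiv_def)

lemma Qe_sym: "P \<simeq>\<^sub>Q P' \<Longrightarrow> P' \<simeq>\<^sub>Q P"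
  unfolding Q_equiv_def
proof (induction rule: rtranclp_induct)
  case base thus ?case by simp
next
  case (step y z)
  have "(\<lambda>a b. Q_move a b \<or> Q_move b a) z y" using step.hyps(2) by auto
  then show ?case using step.IH by (rule converse_rtranclp_into_rtranclp)
qed

lemma Qe_trans: "P \<simeq>\<^sub>Q P' \<Longrightarrow> P' \<simeq>\<^sub>Q P'' \<Longrightarrow> P \<simeq>\<^sub>Q P''"
  unfolding Q_equiv_def by (rule rtranclp_trans)

lemma Qe_move: "Q_move P P' \<Longrightarrow> P \<simeq>\<^sub>Q P'"
  unfolding Q_equiv_def by auto

lemma Qe_mult1: "[a, b] \<simeq>\<^sub>Q [a, b \<otimes>\<^bsub>FG\<^esub> a]"
proof -
  have "Q_move [a, b] [a, b \<otimes>\<^bsub>FG\<^esub> a]" unfolding Q_move_def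
    by (rule disjI1, rule exI[of _ 1], rule exI[of _ 0]) (simp add: wmult_FG)
  thus ?thesis by (rule Qe_move)
qed

lemma Qe_inv0: "[a, b] \<simeq>\<^sub>Q [winv a, b]"
proof -
  have "Q_move [a, b] [winv a, b]" unfolding Q_move_def
    by (rule disjI2, rule disjI1, rule exI[of _ 0]) simp
  thus ?thesis by (rule Qe_move)
qed

lemma Qe_inv1: "[a, b] \<simeq>\<^sub>Q [a, winv b]"
proof -
  have "Q_move [a, b] [a, winv b]" unfolding Q_move_def
    by (rule disjI2, rule disjI1, rule exI[of _ 1]) simp
  thus ?thesis by (rule Qe_move)
qed

lemma conj_FG: "w \<in> carrier FG \<Longrightarrow> wmult (wmult w b) (winv w) = w \<otimes>\<^bsub>FG\<^esub> b \<otimes>\<^bsub>FG\<^esub> inv\<^bsub>FG\<^esub> w"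
  by (simp add: wmult_def inv_FG red_append_right[of _ "winv w"] mult_FG)

lemma Qe_conj0: "w \<in> carrier FG \<Longrightarrow> [a, b] \<simeq>\<^sub>Q [w \<otimes>\<^bsub>FG\<^esub> a \<otimes>\<^bsub>FG\<^esub> inv\<^bsub>FG\<^esub> w, b]"
proof -
  assume w: "w \<in> carrier FG"
  have "Q_move [a, b] [w \<otimes>\<^bsub>FG\<^esub> a \<otimes>\<^bsub>FG\<^esub> inv\<^bsub>FG\<^esub> w, b]" unfolding Q_move_def
    by (rule disjI2, rule disjI2, rule exI[of _ 0], rule exI[of _ w]) (use w in \<open>simp add: conj_FG[OF w] \<close>)
  thus ?thesis by (rule Qe_move)
qed

lemma Qe_conj1: "w \<in> carrier FG \<Longrightarrow> [a, b] \<simeq>\<^sub>Q [a, w \<otimes>\<^bsub>FG\<^esub> b \<otimes>\<^bsub>FG\<^esub> inv\<^bsub>FG\<^esub> w]"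
proof -
  assume w: "w \<in> carrier FG"
  have "Q_move [a, b] [a, w \<otimes>\<^bsub>FG\<^esub> b \<otimes>\<^bsub>FG\<^esub> inv\<^bsub>FG\<^esub> w]" unfolding Q_move_def
    by (rule disjI2, rule disjI2, rule exI[of _ 1], rule exI[of _ w]) (use w in \<open>simp add: conj_FG[OF w] \<close>)
  thus ?thesis by (rule Qe_move)
qed

lemma Qe_inv1': "b \<in> carrier FG \<Longrightarrow> [a, b] \<simeq>\<^sub>Q [a, inv\<^bsub>FG\<^esub> b]"
  using Qe_inv1 by (simp add: inv_FG')

definition Mset :: "word \<Rightarrow> word set" where
  "Mset r0 = {c \<in> carrier FG. \<forall>R \<in> carrier FG. [r0, R] \<simeq>\<^sub>Q [r0, R \<otimes>\<^bsub>FG\<^esub> c]}"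

lemma Mset_normal:
  assumes r0: "r0 \<in> carrier FG"
  shows "Mset r0 \<lhd> FG"
proof -
  have one: "\<one>\<^bsub>FG\<^esub> \<in> Mset r0" unfolding Mset_def by (auto simp: Qe_refl)
  have mul: "c \<otimes>\<^bsub>FG\<^esub> d \<in> Mset r0" if c: "c \<in> Mset r0" and d: "d \<in> Mset r0" for c d
  proof -
    have cc: "c \<in> carrier FG" "d \<in> carrier FG" using c d by (auto simp: Mset_def)
    { fix R assume R: "R \<in> carrier FG"
      have "[r0, R] \<simeq>\<^sub>Q [r0, R \<otimes>\<^bsub>FG\<^esub> c]" using c R by (auto simp: Mset_def)
      moreover have "[r0, R \<otimes>\<^bsub>FG\<^esub> c] \<simeq>\<^sub>Q [r0, R \<otimes>\<^bsub>FG\<^esub> c \<otimes>\<^bsub>FG\<^esub> d]"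
        using d R cc F.m_closed[of R c] unfolding Mset_def by auto
      ultimately have "[r0, R] \<simeq>\<^sub>Q [r0, R \<otimes>\<^bsub>FG\<^esub> c \<otimes>\<^bsub>FG\<^esub> d]"
        by (rule Qe_trans)
      moreover have "R \<otimes>\<^bsub>FG\<^esub> c \<otimes>\<^bsub>FG\<^esub> d = R \<otimes>\<^bsub>FG\<^esub> (c \<otimes>\<^bsub>FG\<^esub> d)"
        by (rule F.m_assoc) (use R cc in \<open>simp_all \<close>)
      ultimately have "[r0, R] \<simeq>\<^sub>Q [r0, R \<otimes>\<^bsub>FG\<^esub> (c \<otimes>\<^bsub>FG\<^esub> d)]" by simp }
    then show ?thesis using cc F.m_closed[of c d] unfolding Mset_def by auto
  qed
  have inv: "inv\<^bsub>FG\<^esub> c \<in> Mset r0" if c: "c \<in> Mset r0" for c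
  proof -
    have cc: "c \<in> carrier FG" using c by (auto simp: Mset_def)
    { fix R assume R: "R \<in> carrier FG"
      have "[r0, R \<otimes>\<^bsub>FG\<^esub> inv\<^bsub>FG\<^esub> c] \<simeq>\<^sub>Q [r0, R \<otimes>\<^bsub>FG\<^esub> inv\<^bsub>FG\<^esub> c \<otimes>\<^bsub>FG\<^esub> c]"
        using c R cc F.m_closed[of R "inv\<^bsub>FG\<^esub> c"] unfolding Mset_def by auto
      moreover have "R \<otimes>\<^bsub>FG\<^esub> inv\<^bsub>FG\<^esub> c \<otimes>\<^bsub>FG\<^esub> c = R"
        using R cc by (simp add: F.m_assoc )
      ultimately have "[r0, R] \<simeq>\<^sub>Q [r0, R \<otimes>\<^bsub>FG\<^esub> inv\<^bsub>FG\<^esub> c]"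
        by (simp add: Qe_sym) }
    then show ?thesis using cc unfolding Mset_def by auto
  qed
  have conj: "g \<otimes>\<^bsub>FG\<^esub> c \<otimes>\<^bsub>FG\<^esub> inv\<^bsub>FG\<^esub> g \<in> Mset r0" if c: "c \<in> Mset r0" and g: "g \<in> carrier FG" for c g
  proof -
    have cc: "c \<in> carrier FG" using c by (auto simp: Mset_def)
    { fix R assume R: "R \<in> carrier FG"
      have h1: "[r0, R] \<simeq>\<^sub>Q [r0, inv\<^bsub>FG\<^esub> g \<otimes>\<^bsub>FG\<^esub> R \<otimes>\<^bsub>FG\<^esub> inv\<^bsub>FG\<^esub> (inv\<^bsub>FG\<^esub> g)]"
        using g by (intro Qe_conj1) auto
      have h2: "[r0, inv\<^bsub>FG\<^esub> g \<otimes>\<^bsub>FG\<^esub> R \<otimes>\<^bsub>FG\<^esub> g] \<simeq>\<^sub>Q [r0, inv\<^bsub>FG\<^esub> g \<otimes>\<^bsub>FG\<^esub> R \<otimes>\<^bsub>FG\<^esub> g \<otimes>\<^bsub>FG\<^esub> c]"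
        using c R g unfolding Mset_def by auto
      have h3: "[r0, inv\<^bsub>FG\<^esub> g \<otimes>\<^bsub>FG\<^esub> R \<otimes>\<^bsub>FG\<^esub> g \<otimes>\<^bsub>FG\<^esub> c] \<simeq>\<^sub>Q
          [r0, g \<otimes>\<^bsub>FG\<^esub> (inv\<^bsub>FG\<^esub> g \<otimes>\<^bsub>FG\<^esub> R \<otimes>\<^bsub>FG\<^esub> g \<otimes>\<^bsub>FG\<^esub> c) \<otimes>\<^bsub>FG\<^esub> inv\<^bsub>FG\<^esub> g]"
        using g by (intro Qe_conj1) auto
      have h4: "g \<otimes>\<^bsub>FG\<^esub> (inv\<^bsub>FG\<^esub> g \<otimes>\<^bsub>FG\<^esub> R \<otimes>\<^bsub>FG\<^esub> g \<otimes>\<^bsub>FG\<^esub> c) \<otimes>\<^bsub>FG\<^esub> inv\<^bsub>FG\<^esub> g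
          = R \<otimes>\<^bsub>FG\<^esub> (g \<otimes>\<^bsub>FG\<^esub> c \<otimes>\<^bsub>FG\<^esub> inv\<^bsub>FG\<^esub> g)"
      proof -
        have e: "g \<otimes>\<^bsub>FG\<^esub> (inv\<^bsub>FG\<^esub> g \<otimes>\<^bsub>FG\<^esub> z) = z" if z: "z \<in> carrier FG" for z
        proof -
          have "g \<otimes>\<^bsub>FG\<^esub> (inv\<^bsub>FG\<^esub> g \<otimes>\<^bsub>FG\<^esub> z) = (g \<otimes>\<^bsub>FG\<^esub> inv\<^bsub>FG\<^esub> g) \<otimes>\<^bsub>FG\<^esub> z"
            using z g by (simp add: F.m_assoc[symmetric])
          also have "\<dots> = z" using z g by simp
          finally show ?thesis .
        qed
        show ?thesis using g R cc by (simp add: F.m_assoc e)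
      qed
      have h5: "inv\<^bsub>FG\<^esub> (inv\<^bsub>FG\<^esub> g) = g" using g by (simp)
      from h1 h5 have h1': "[r0, R] \<simeq>\<^sub>Q [r0, inv\<^bsub>FG\<^esub> g \<otimes>\<^bsub>FG\<^esub> R \<otimes>\<^bsub>FG\<^esub> g]" by simp
      from Qe_trans[OF Qe_trans[OF h1' h2] h3] h4
      have "[r0, R] \<simeq>\<^sub>Q [r0, R \<otimes>\<^bsub>FG\<^esub> (g \<otimes>\<^bsub>FG\<^esub> c \<otimes>\<^bsub>FG\<^esub> inv\<^bsub>FG\<^esub> g)]"
        by simp }
    moreover have "g \<otimes>\<^bsub>FG\<^esub> c \<otimes>\<^bsub>FG\<^esub> inv\<^bsub>FG\<^esub> g \<in> carrier FG" using cc g by simp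
    ultimately show ?thesis unfolding Mset_def by blast
  qed
  have ss: "Mset r0 \<subseteq> carrier FG" unfolding Mset_def by blast
  have sub: "subgroup (Mset r0) FG"
    by (rule F.subgroupI) (use one mul inv ss in blast)+
  show ?thesis
    by (rule F.normal_inv_iff[THEN iffD2]) (use sub conj in blast)
qed

lemma r0_in_Mset:
  assumes r0: "r0 \<in> carrier FG" shows "r0 \<in> Mset r0"
  using r0 Qe_mult1 unfolding Mset_def by auto

lemma Qe_mod:
  assumes r0: "r0 \<in> carrier FG" and R: "R \<in> carrier FG"
    and c: "c \<in> normal_closure FG {r0}"
  shows "[r0, R] \<simeq>\<^sub>Q [r0, R \<otimes>\<^bsub>FG\<^esub> c]"
proof -
  have "normal_closure FG {r0} \<subseteq> Mset r0"
    by (rule nc_least[OF Mset_normal[OF r0]]) (use r0_in_Mset[OF r0] in auto)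
  with c R show ?thesis unfolding Mset_def by auto
qed


lemma red_app: "red (u @ v) = red u \<otimes>\<^bsub>FG\<^esub> red v"
proof -
  have "red (u @ v) = red (red u @ v)" by (rule red_append_left)
  also have "\<dots> = red (red u @ red v)" by (rule red_append_right)
  finally show ?thesis by (simp only: mult_FG)
qed

lemma reduced_replicate: "reduced (replicate m a)"
proof (induction m)
  case (Suc m)
  have "a \<noteq> inv_letter a" using inv_letter_neq[of a] by metis
  with Suc show ?case by (cases m) auto
qed simp

lemma gx_carrier[simp]: "gx \<in> carrier FG" and gy_carrier[simp]: "gy \<in> carrier FG"
  by (auto simp: gx_def gy_def carrier_FG)

lemma gx_pow_nat: "gx [^]\<^bsub>FG\<^esub> (m::nat) = replicate m (GX, True)"
proof (induction m)
  case 0 thus ?case by (simp add: one_FG)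
next
  case (Suc m)
  have "gx [^]\<^bsub>FG\<^esub> Suc m = gx [^]\<^bsub>FG\<^esub> m \<otimes>\<^bsub>FG\<^esub> gx" by simp
  also have "\<dots> = red (replicate m (GX, True) @ [(GX, True)])" by (simp add: Suc mult_FG) (simp add: gx_def)
  also have "replicate m (GX, True) @ [(GX, True)] = replicate (Suc m) (GX, True)"
    by (simp add: replicate_append_same)
  finally show ?case using red_reduced[OF reduced_replicate[of "Suc m" "(GX,True)"]] by simp
qed

lemma winv_replicate: "winv (replicate m (GX, True)) = replicate m (GX, False)"
  by (simp add: winv_def inv_letter_def)

lemma gx_pow_int: "gx [^]\<^bsub>FG\<^esub> (a::int) = xpow a"
proof (cases "a \<ge> 0")
  case True
  then have "gx [^]\<^bsub>FG\<^esub> a = gx [^]\<^bsub>FG\<^esub> (nat a)"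
    by (metis int_pow_int nat_0_le)
  then show ?thesis using True by (simp add: gx_pow_nat xpow_def)
next
  case False
  then have "gx [^]\<^bsub>FG\<^esub> a = inv\<^bsub>FG\<^esub> (gx [^]\<^bsub>FG\<^esub> (nat (-a)))"
    by (metis F.int_pow_neg_int gx_carrier minus_minus nat_0_le neg_0_le_iff_le nle_le)
  also have "\<dots> = replicate (nat (-a)) (GX, False)"
    by (simp add: gx_pow_nat inv_FG' carrier_FG reduced_replicate winv_replicate)
  finally show ?thesis using False by (simp add: xpow_def)
qed

lemma xpow_carrier: "xpow a \<in> carrier FG"
  using gx_pow_int[of a] by (metis F.int_pow_closed gx_carrier)

lemma gx_inv: "inv\<^bsub>FG\<^esub> gx = [(GX, False)]"
  using inv_FG'[OF gx_carrier] by (simp add: gx_def winv_def inv_letter_def)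
lemma gy_inv: "inv\<^bsub>FG\<^esub> gy = [(GY, False)]"
  using inv_FG'[OF gy_carrier] by (simp add: gy_def winv_def inv_letter_def)

definition Pg :: "('a, 'b) monoid_scheme \<Rightarrow> 'a \<Rightarrow> 'a \<Rightarrow> (int \<times> int) list \<Rightarrow> 'a" where
  "Pg G xg yg L = foldr (\<lambda>(a, b) acc. xg [^]\<^bsub>G\<^esub> a \<otimes>\<^bsub>G\<^esub> yg \<otimes>\<^bsub>G\<^esub> xg [^]\<^bsub>G\<^esub> b \<otimes>\<^bsub>G\<^esub> inv\<^bsub>G\<^esub> yg \<otimes>\<^bsub>G\<^esub> acc) L \<one>\<^bsub>G\<^esub>"

lemma Pg_Nil[simp]: "Pg G xg yg [] = \<one>\<^bsub>G\<^esub>" by (simp add: Pg_def)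
lemma Pg_Cons[simp]: "Pg G xg yg ((a, b) # L) = xg [^]\<^bsub>G\<^esub> a \<otimes>\<^bsub>G\<^esub> yg \<otimes>\<^bsub>G\<^esub> xg [^]\<^bsub>G\<^esub> b \<otimes>\<^bsub>G\<^esub> inv\<^bsub>G\<^esub> yg \<otimes>\<^bsub>G\<^esub> Pg G xg yg L"
  by (simp add: Pg_def)

lemma (in group) Pg_closed[simp]: "xg \<in> carrier G \<Longrightarrow> yg \<in> carrier G \<Longrightarrow> Pg G xg yg L \<in> carrier G"
  by (induction L) auto

lemma red_concat_Pg:
  "red (concat (map (\<lambda>(a, b). xpow a @ [(GY, True)] @ xpow b @ [(GY, False)]) L)) = Pg FG gx gy L"
proof (induction L)
  case Nil thus ?case by (simp add: one_FG)
next
  case (Cons p L)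
  obtain a b where p: "p = (a, b)" by (cases p)
  have xr: "red (xpow c) = xpow c" for c using xpow_carrier[of c] by (simp add: carrier_FG red_reduced)
  have "red (concat (map (\<lambda>(a, b). xpow a @ [(GY, True)] @ xpow b @ [(GY, False)]) (p # L)))
      = red (xpow a @ [(GY, True)] @ xpow b @ [(GY, False)] @ concat (map (\<lambda>(a, b). xpow a @ [(GY, True)] @ xpow b @ [(GY, False)]) L))"
    by (simp add: p)
  also have "\<dots> = xpow a \<otimes>\<^bsub>FG\<^esub> (gy \<otimes>\<^bsub>FG\<^esub> (xpow b \<otimes>\<^bsub>FG\<^esub> (inv\<^bsub>FG\<^esub> gy \<otimes>\<^bsub>FG\<^esub> Pg FG gx gy L)))"
    by (simp only: red_app[of "xpow _"] red_app[of "[_]"] Cons xr gy_inv)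
      (simp add: gy_def red_reduced)
  also have "\<dots> = Pg FG gx gy (p # L)"
    by (simp add: p gx_pow_int F.m_assoc xpow_carrier)
  finally show ?case .
qed

lemma Pn_rel_Pg:
  "Pn_rel ns ms = Pg FG gx gy (zip (ns @ [1 - sum_list ns]) (ms @ [1 - sum_list ms]))"
  unfolding Pn_rel_def Let_def by (rule red_concat_Pg)

lemma Pn_rel_carrier: "Pn_rel ns ms \<in> carrier FG"
  by (simp add: Pn_rel_Pg)

lemma rel0_FG: "rel0 n = gx [^]\<^bsub>FG\<^esub> n \<otimes>\<^bsub>FG\<^esub> inv\<^bsub>FG\<^esub> gy \<otimes>\<^bsub>FG\<^esub> inv\<^bsub>FG\<^esub> gy"
proof -
  have r: "reduced (rel0 n)"
    by (induction n) (auto simp: rel0_def reduced_Cons inv_letter_def hd_append)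
  have "rel0 n = red (replicate n (GX, True) @ [(GY, False)] @ [(GY, False)])"
    using r by (simp add: rel0_def red_reduced)
  also have "\<dots> = gx [^]\<^bsub>FG\<^esub> n \<otimes>\<^bsub>FG\<^esub> (inv\<^bsub>FG\<^esub> gy \<otimes>\<^bsub>FG\<^esub> inv\<^bsub>FG\<^esub> gy)"
    by (simp only: red_app gy_inv gx_pow_nat) (simp add: red_reduced reduced_replicate)
  finally show ?thesis by (simp add: F.m_assoc)
qed

lemma rel0_carrier: "rel0 n \<in> carrier FG"
  by (simp add: rel0_FG)

definition qrel :: word where "qrel = [(GX, True), (GY, True), (GX, True), (GY, False)]"

lemma qrel_FG: "qrel = gx \<otimes>\<^bsub>FG\<^esub> gy \<otimes>\<^bsub>FG\<^esub> gx \<otimes>\<^bsub>FG\<^esub> inv\<^bsub>FG\<^esub> gy"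
  unfolding gy_inv by (simp add: qrel_def mult_FG gx_def gy_def red_Cons cancel_def inv_letter_def)

lemma qrel_carrier: "qrel \<in> carrier FG"
  by (simp add: qrel_FG)


section \<open>Homomorphisms out of FG agreeing on generators\<close>

lemma letter_cases:
  "[a] = gx \<or> [a] = gy \<or> [a] = inv\<^bsub>FG\<^esub> gx \<or> [a] = inv\<^bsub>FG\<^esub> gy"
  by (cases a) (metis (full_types) gen.exhaust gx_def gy_def gx_inv gy_inv)

lemma hom_agree:
  assumes H: "group H" and f: "f \<in> hom FG H" and g: "g \<in> hom FG H"
    and fx: "f gx = g gx" and fy: "f gy = g gy"
  shows "w \<in> carrier FG \<Longrightarrow> f w = g w"
proof (induction w)
  case Nil
  have "f \<one>\<^bsub>FG\<^esub> = \<one>\<^bsub>H\<^esub>" "g \<one>\<^bsub>FG\<^esub> = \<one>\<^bsub>H\<^esub>"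
    using f g H group_FG by (auto intro: group_hom.hom_one simp: group_hom_def group_hom_axioms_def)
  then show ?case by (simp add: one_FG)
next
  case (Cons a w)
  have gf: "group_hom FG H f" "group_hom FG H g"
    using f g H group_FG by (auto simp: group_hom_def group_hom_axioms_def)
  have w: "w \<in> carrier FG" using Cons.prems by (simp add: carrier_FG reduced_Cons)
  have a: "[a] \<in> carrier FG" by (simp add: carrier_FG)
  have aw: "a # w = [a] \<otimes>\<^bsub>FG\<^esub> w"
    using Cons.prems by (simp add: mult_FG carrier_FG red_reduced)
  have fa: "f [a] = g [a]"
    using letter_cases[of a] fx fy gf
    by (auto simp: group_hom.hom_inv)
  show ?case
    unfolding aw using gf a w fa Cons.IH[OF w]
    by (simp add: group_hom.hom_mult)
qed

lemma normalFG: "S \<subseteq> carrier FG \<Longrightarrow> normal_closure FG S \<lhd> FG"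
  by (rule F.nc_normal)

lemma rcos_eq_iff: "N \<lhd> FG \<Longrightarrow> w \<in> carrier FG \<Longrightarrow> N #>\<^bsub>FG\<^esub> w = N \<longleftrightarrow> w \<in> N"
  by (metis F.rcos_self normal_imp_subgroup subgroup.rcos_const group_FG)

lemma regular_facts:
  assumes reg: "regular n R" and R: "R \<in> carrier FG"
  shows "R \<in> normal_closure FG {rel0 n, qrel}" "qrel \<in> normal_closure FG {rel0 n, R}"
proof -
  define NP where "NP = normal_closure FG {rel0 n, R}"
  define NQ where "NQ = normal_closure FG {rel0 n, qrel}"
  have Qr: "Q_rels n = [rel0 n, qrel]" by (simp add: Q_rels_def qrel_def)
  obtain h where h: "h \<in> iso (FG Mod NP) (FG Mod NQ)"
      and hx: "h (NP #>\<^bsub>FG\<^esub> gx) = NQ #>\<^bsub>FG\<^esub> gx" and hy: "h (NP #>\<^bsub>FG\<^esub> gy) = NQ #>\<^bsub>FG\<^esub> gy"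
    using reg unfolding regular_def Let_def pres_group_def Qr NP_def NQ_def by auto
  have nP: "NP \<lhd> FG" unfolding NP_def
    by (rule normalFG) (use R rel0_carrier in auto)
  have nQ: "NQ \<lhd> FG" unfolding NQ_def
    by (rule normalFG) (use qrel_carrier rel0_carrier in auto)
  have GP: "group (FG Mod NP)" by (rule normal.factorgroup_is_group[OF nP])
  have GQ: "group (FG Mod NQ)" by (rule normal.factorgroup_is_group[OF nQ])
  have hh: "h \<in> hom (FG Mod NP) (FG Mod NQ)" using h by (simp add: iso_def)
  have piP: "(\<lambda>w. NP #>\<^bsub>FG\<^esub> w) \<in> hom FG (FG Mod NP)" by (rule normal.r_coset_hom_Mod[OF nP])
  have piQ: "(\<lambda>w. NQ #>\<^bsub>FG\<^esub> w) \<in> hom FG (FG Mod NQ)" by (rule normal.r_coset_hom_Mod[OF nQ])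
  have comp: "(\<lambda>w. h (NP #>\<^bsub>FG\<^esub> w)) \<in> hom FG (FG Mod NQ)"
    using hom_compose[OF piP hh] by (simp add: comp_def)
  have agree: "h (NP #>\<^bsub>FG\<^esub> w) = NQ #>\<^bsub>FG\<^esub> w" if "w \<in> carrier FG" for w
    using hom_agree[OF GQ comp piQ hx hy that] .
  have h1: "h NP = NQ"
  proof -
    have "group_hom (FG Mod NP) (FG Mod NQ) h"
      by (rule group_hom.intro[OF GP GQ]) (simp add: group_hom_axioms_def hh)
    then have "h \<one>\<^bsub>FG Mod NP\<^esub> = \<one>\<^bsub>FG Mod NQ\<^esub>" by (rule group_hom.hom_one)
    then show ?thesis by (simp only: one_FactGroup)
  qed
  have RNP: "R \<in> NP" unfolding NP_def by (rule subsetD[OF nc_sub]) simp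
  have e1: "NP #>\<^bsub>FG\<^esub> R = NP" using rcos_eq_iff[OF nP R] RNP by (simp only:)
  have "NQ #>\<^bsub>FG\<^esub> R = h (NP #>\<^bsub>FG\<^esub> R)" using agree[OF R] by (rule sym)
  also have "\<dots> = NQ" by (simp only: e1 h1)
  finally have "R \<in> NQ" using rcos_eq_iff[OF nQ R] by (simp only:)
  then show "R \<in> normal_closure FG {rel0 n, qrel}" unfolding NQ_def .
  have qNQ: "qrel \<in> NQ" unfolding NQ_def by (rule subsetD[OF nc_sub]) simp
  have e2: "NQ #>\<^bsub>FG\<^esub> qrel = NQ" using rcos_eq_iff[OF nQ qrel_carrier] qNQ by (simp only:)
  have hq: "h (NP #>\<^bsub>FG\<^esub> qrel) = h NP"
    by (simp only: agree[OF qrel_carrier] e2 h1)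
  have hi: "inj_on h (carrier (FG Mod NP))" using h by (simp add: iso_def bij_betw_def)
  have c1: "NP #>\<^bsub>FG\<^esub> qrel \<in> carrier (FG Mod NP)"
    unfolding carrier_FactGroup using qrel_carrier by (rule imageI)
  have c2: "NP \<in> carrier (FG Mod NP)"
    using one_FactGroup[of FG NP] monoid.one_closed[OF group.is_monoid[OF GP]] by simp
  have "NP #>\<^bsub>FG\<^esub> qrel = NP" by (rule inj_onD[OF hi hq c1 c2])
  then have "qrel \<in> NP" using rcos_eq_iff[OF nP qrel_carrier] by (simp only:)
  then show "qrel \<in> normal_closure FG {rel0 n, R}" unfolding NP_def .
qed


section \<open>The weight homomorphism phi\<close>

definition phil :: "nat \<Rightarrow> letter \<Rightarrow> int" where
  "phil n a = (case a of (GX, b) \<Rightarrow> (if b then 2 else -2) | (GY, b) \<Rightarrow> (if b then int n else - int n))"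

definition phi :: "nat \<Rightarrow> word \<Rightarrow> int" where
  "phi n w = sum_list (map (phil n) w)"

lemma phil_inv[simp]: "phil n (inv_letter a) = - phil n a"
  by (cases a) (auto simp: phil_def inv_letter_def split: gen.splits)

lemma phi_Nil[simp]: "phi n [] = 0" and phi_Cons[simp]: "phi n (a # w) = phil n a + phi n w"
  and phi_append[simp]: "phi n (u @ v) = phi n u + phi n v"
  by (auto simp: phi_def)

lemma phi_cancel: "phi n (cancel a s) = phil n a + phi n s"
  by (cases s) (auto simp: cancel_def)

lemma phi_red[simp]: "phi n (red w) = phi n w"
  by (induction w) (auto simp: red_Cons phi_cancel)

lemma phi_mult: "phi n (u \<otimes>\<^bsub>FG\<^esub> v) = phi n u + phi n v"
  by (simp add: mult_FG)

lemma phi_winv: "phi n (winv w) = - phi n w"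
  by (induction w) (auto simp: winv_def)

lemma phi_inv: "w \<in> carrier FG \<Longrightarrow> phi n (inv\<^bsub>FG\<^esub> w) = - phi n w"
  by (simp add: inv_FG' phi_winv)

definition Dset :: "nat \<Rightarrow> int \<Rightarrow> word set" where
  "Dset n d = {w \<in> carrier FG. d dvd phi n w}"

lemma Dset_normal: "Dset n d \<lhd> FG"
proof -
  have ss: "Dset n d \<subseteq> carrier FG" by (auto simp: Dset_def)
  have sub: "subgroup (Dset n d) FG"
  proof (rule F.subgroupI[OF ss])
    show "Dset n d \<noteq> {}" using F.one_closed by (auto simp: Dset_def one_FG)
  next
    fix a assume "a \<in> Dset n d" then show "inv\<^bsub>FG\<^esub> a \<in> Dset n d"
      by (auto simp: Dset_def phi_inv)
  next
    fix a b assume "a \<in> Dset n d" "b \<in> Dset n d" then show "a \<otimes>\<^bsub>FG\<^esub> b \<in> Dset n d"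
      by (auto simp: Dset_def phi_mult)
  qed
  have "\<forall>x\<in>carrier FG. \<forall>h\<in>Dset n d. x \<otimes>\<^bsub>FG\<^esub> h \<otimes>\<^bsub>FG\<^esub> inv\<^bsub>FG\<^esub> x \<in> Dset n d"
    by (auto simp: Dset_def phi_mult phi_inv)
  then show ?thesis by (intro F.normal_inv_iff[THEN iffD2] conjI sub)
qed

lemma phi_rel0: "phi n (rel0 n) = 0"
  by (simp add: rel0_def phi_def phil_def sum_list_replicate)

lemma phi_qrel: "phi n qrel = 4"
  by (simp add: qrel_def phil_def)

lemma phi_R:
  assumes "R \<in> normal_closure FG {rel0 n, qrel}" "qrel \<in> normal_closure FG {rel0 n, R}"
    and R: "R \<in> carrier FG"
  shows "phi n R = 4 \<or> phi n R = -4"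
proof -
  have "normal_closure FG {rel0 n, qrel} \<subseteq> Dset n 4"
    by (rule nc_least[OF Dset_normal]) (auto simp: Dset_def phi_rel0 phi_qrel rel0_carrier qrel_carrier)
  with assms(1) have d1: "4 dvd phi n R" by (auto simp: Dset_def)
  have "normal_closure FG {rel0 n, R} \<subseteq> Dset n (phi n R)"
    by (rule nc_least[OF Dset_normal]) (auto simp: Dset_def phi_rel0 rel0_carrier R)
  with assms(2) have d2: "phi n R dvd 4" by (auto simp: Dset_def phi_qrel)
  from d1 obtain k where k: "phi n R = 4 * k" by (elim dvdE)
  with d2 have "4 * k dvd 4 * 1" by simp
  then have "k dvd 1" by (subst (asm) dvd_mult_cancel_left) simp
  then have "\<bar>k\<bar> = 1" by (simp add: zdvd1_eq)
  then show ?thesis using k by linarith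
qed


section \<open>The quaternion group as a concrete group\<close>

definition Qm :: "nat \<Rightarrow> int \<times> bool \<Rightarrow> int \<times> bool \<Rightarrow> int \<times> bool" where
  "Qm n p q = ((fst p + (if snd p then - fst q else fst q) + (if snd p \<and> snd q then int n else 0)) mod (2 * int n),
               snd p \<noteq> snd q)"

definition Qgrp :: "nat \<Rightarrow> (int \<times> bool) monoid" where
  "Qgrp n = \<lparr>carrier = {p. 0 \<le> fst p \<and> fst p < 2 * int n}, monoid.mult = Qm n, one = (0, False)\<rparr>"

lemma Qgrp_simps[simp]: "carrier (Qgrp n) = {p. 0 \<le> fst p \<and> fst p < 2 * int n}"
  "x \<otimes>\<^bsub>Qgrp n\<^esub> y = Qm n x y" "\<one>\<^bsub>Qgrp n\<^esub> = (0, False)"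
  by (auto simp: Qgrp_def)

lemma mod_eqI: "(N::int) dvd (a - b) \<Longrightarrow> a mod N = b mod N"
  by (simp add: mod_eq_dvd_iff)

lemma mod_eqI0: "(N::int) dvd a \<Longrightarrow> a mod N = 0"
  by simp

lemma Qm_assoc: "Qm n (Qm n p q) r = Qm n p (Qm n q r)"
proof -
  obtain s e where p: "p = (s, e)" by (cases p)
  obtain t f where q: "q = (t, f)" by (cases q)
  obtain u g where r: "r = (u, g)" by (cases r)
  show ?thesis
    unfolding p q r Qm_def
    by (cases e; cases f; cases g; simp add: mod_simps; rule mod_eqI; simp add: algebra_simps minus_div_mult_eq_mod[symmetric])
qed

lemma group_Qgrp: "n \<ge> 1 \<Longrightarrow> group (Qgrp n)"
proof (rule groupI)
  assume n: "n \<ge> 1"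
  fix x y assume "x \<in> carrier (Qgrp n)" "y \<in> carrier (Qgrp n)"
  then show "x \<otimes>\<^bsub>Qgrp n\<^esub> y \<in> carrier (Qgrp n)" using n by (simp add: Qm_def)
next
  assume n: "n \<ge> 1"
  show "\<one>\<^bsub>Qgrp n\<^esub> \<in> carrier (Qgrp n)" using n by simp
next
  fix x y z show "x \<otimes>\<^bsub>Qgrp n\<^esub> y \<otimes>\<^bsub>Qgrp n\<^esub> z = x \<otimes>\<^bsub>Qgrp n\<^esub> (y \<otimes>\<^bsub>Qgrp n\<^esub> z)"
    by (simp add: Qm_assoc)
next
  fix x assume "x \<in> carrier (Qgrp n)" then show "\<one>\<^bsub>Qgrp n\<^esub> \<otimes>\<^bsub>Qgrp n\<^esub> x = x"
    by (cases x) (simp add: Qm_def)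
next
  assume n: "n \<ge> 1"
  fix x assume x: "x \<in> carrier (Qgrp n)"
  obtain s e where xe: "x = (s, e)" by (cases x)
  show "\<exists>y\<in>carrier (Qgrp n). y \<otimes>\<^bsub>Qgrp n\<^esub> x = \<one>\<^bsub>Qgrp n\<^esub>"
  proof (cases e)
    case True
    have "((s - int n) mod (2 * int n) - s + int n) mod (2 * int n) = 0"
      by (rule mod_eqI0) (simp add: algebra_simps minus_div_mult_eq_mod[symmetric])
    then show ?thesis
      by (intro bexI[of _ "((s - int n) mod (2 * int n), True)"])
        (use n True in \<open>auto simp: xe Qm_def\<close>)
  next
    case False
    show ?thesis
      by (rule bexI[of _ "((- s) mod (2 * int n), False)"])
        (use n False in \<open>auto simp: xe Qm_def mod_simps\<close>)
  qed
qed

definition Ql :: "nat \<Rightarrow> letter \<Rightarrow> int \<times> bool" where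
  "Ql n a = (case a of (GX, b) \<Rightarrow> ((if b then 1 else -1) mod (2 * int n), False)
                     | (GY, b) \<Rightarrow> (if b then (0, True) else (int n, True)))"

definition Ev :: "nat \<Rightarrow> word \<Rightarrow> int \<times> bool" where
  "Ev n w = foldr (\<lambda>a acc. Qm n (Ql n a) acc) w (0, False)"

lemma Ev_Nil[simp]: "Ev n [] = (0, False)" and Ev_Cons[simp]: "Ev n (a # w) = Qm n (Ql n a) (Ev n w)"
  by (auto simp: Ev_def)

context
  fixes n :: nat assumes n: "n \<ge> 1"
begin

interpretation Q: group "Qgrp n" by (rule group_Qgrp[OF n])

lemma Ql_carrier: "Ql n a \<in> carrier (Qgrp n)"
  using n by (auto simp: Ql_def split: prod.splits gen.splits)

lemma Ev_carrier: "Ev n w \<in> carrier (Qgrp n)"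
  by (induction w) (use Ql_carrier n in \<open>auto simp: Qm_def\<close>)

lemma Ql_inv: "Qm n (Ql n a) (Ql n (inv_letter a)) = (0, False)"
proof -
  obtain g b where a: "a = (g, b)" by (cases a)
  show ?thesis unfolding a
    by (cases g; cases b) (simp_all add: Ql_def inv_letter_def Qm_def mod_simps)
qed

lemma Qm_one: "p \<in> carrier (Qgrp n) \<Longrightarrow> Qm n (0, False) p = p"
  by (cases p) (simp add: Qm_def)

lemma Ev_cancel: "Ev n (cancel a s) = Qm n (Ql n a) (Ev n s)"
proof (cases s)
  case Nil then show ?thesis by (simp add: cancel_def)
next
  case (Cons b u)
  show ?thesis
  proof (cases "b = inv_letter a")
    case True
    have "Qm n (Ql n a) (Ev n s) = Qm n (Qm n (Ql n a) (Ql n b)) (Ev n u)"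
      using Cons by (simp add: Qm_assoc)
    also have "\<dots> = Ev n u" using True Ql_inv Qm_one Ev_carrier by simp
    finally show ?thesis using Cons True by (simp add: cancel_def)
  qed (use Cons in \<open>simp add: cancel_def\<close>)
qed

lemma Ev_red: "Ev n (red w) = Ev n w"
  by (induction w) (simp_all add: red_Cons Ev_cancel)

lemma Qm_one_Ev: "Qm n (0, False) (Ev n w) = Ev n w"
  by (rule Qm_one[OF Ev_carrier])

lemma Ev_append: "Ev n (u @ v) = Qm n (Ev n u) (Ev n v)"
  by (induction u) (simp_all add: Qm_one_Ev Qm_assoc)

lemma Ev_mult: "Ev n (u \<otimes>\<^bsub>FG\<^esub> v) = Ev n u \<otimes>\<^bsub>Qgrp n\<^esub> Ev n v"
  by (simp add: mult_FG Ev_red Ev_append)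

lemma Ev_hom: "Ev n \<in> hom FG (Qgrp n)"
  by (rule homI) (rule Ev_carrier, rule Ev_mult)

lemma Ev_normal: "kernel FG (Qgrp n) (Ev n) \<lhd> FG"
  by (rule group_hom.normal_kernel)
    (simp add: group_hom_def group_hom_axioms_def group_FG Q.group_axioms Ev_hom)

lemma Ev_rep_x: "Ev n (replicate m (GX, True)) = (int m mod (2 * int n), False)"
  by (induction m) (simp_all add: Ql_def Qm_def mod_simps)

lemma Ev_rep_x': "Ev n (replicate m (GX, False)) = ((- int m) mod (2 * int n), False)"
  by (induction m) (simp_all add: Ql_def Qm_def mod_simps)

lemma Ev_xpow: "Ev n (xpow a) = (a mod (2 * int n), False)"
  by (simp add: xpow_def Ev_rep_x Ev_rep_x')

lemma Ev_rel0: "Ev n (rel0 n) = (0, False)"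
  using n by (simp add: rel0_def Ev_append Ev_rep_x Ql_def Qm_def mod_simps)

lemma Ev_qrel: "n \<ge> 2 \<Longrightarrow> Ev n qrel = (0, False)"
  by (simp add: qrel_def Ql_def Qm_def mod_simps)

lemma Ev_R:
  assumes "R \<in> normal_closure FG {rel0 n, qrel}" "n \<ge> 2"
  shows "Ev n R = (0, False)"
proof -
  have "normal_closure FG {rel0 n, qrel} \<subseteq> kernel FG (Qgrp n) (Ev n)"
    by (rule nc_least[OF Ev_normal]) (use assms(2) in \<open>auto simp: kernel_def Ev_rel0 Ev_qrel rel0_carrier qrel_carrier\<close>)
  with assms(1) show ?thesis by (auto simp: kernel_def)
qed

end


definition NFe :: "('a, 'b) monoid_scheme \<Rightarrow> 'a \<Rightarrow> 'a \<Rightarrow> (int \<times> int) list \<Rightarrow> int \<Rightarrow> bool \<Rightarrow> 'a" where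
  "NFe G xg yg L c e = Pg G xg yg L \<otimes>\<^bsub>G\<^esub> xg [^]\<^bsub>G\<^esub> c \<otimes>\<^bsub>G\<^esub> (if e then yg else \<one>\<^bsub>G\<^esub>)"

definition sa :: "(int \<times> int) list \<Rightarrow> int" where "sa L = sum_list (map fst L)"
definition sb :: "(int \<times> int) list \<Rightarrow> int" where "sb L = sum_list (map snd L)"

lemma sa_simps[simp]: "sa [] = 0" "sa ((a, b) # L) = a + sa L" "sa (L @ M) = sa L + sa M"
  by (auto simp: sa_def)
lemma sb_simps[simp]: "sb [] = 0" "sb ((a, b) # L) = b + sb L" "sb (L @ M) = sb L + sb M"
  by (auto simp: sb_def)

context group
begin

lemma Pg_append: "xg \<in> carrier G \<Longrightarrow> yg \<in> carrier G \<Longrightarrow> Pg G xg yg (L @ M) = Pg G xg yg L \<otimes> Pg G xg yg M"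
  by (induction L) (auto simp: m_assoc)

lemma Pg_single: "xg \<in> carrier G \<Longrightarrow> yg \<in> carrier G \<Longrightarrow>
  Pg G xg yg [(a, b)] = xg [^] a \<otimes> yg \<otimes> xg [^] b \<otimes> inv yg"
  by simp

lemma inv_cancel1[simp]: "y \<in> carrier G \<Longrightarrow> z \<in> carrier G \<Longrightarrow> inv y \<otimes> (y \<otimes> z) = z"
  by (simp add: m_assoc[symmetric])
lemma inv_cancel2[simp]: "y \<in> carrier G \<Longrightarrow> z \<in> carrier G \<Longrightarrow> y \<otimes> (inv y \<otimes> z) = z"
  by (simp add: m_assoc[symmetric])

lemma commutes_inv:
  assumes z: "z \<in> carrier G" and y: "y \<in> carrier G" and c: "z \<otimes> y = y \<otimes> z"
  shows "inv z \<otimes> y = y \<otimes> inv z"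
proof -
  have "inv z \<otimes> y = inv z \<otimes> (y \<otimes> z) \<otimes> inv z" using z y by (simp add: m_assoc)
  also have "\<dots> = inv z \<otimes> (z \<otimes> y) \<otimes> inv z" by (simp add: c)
  also have "\<dots> = y \<otimes> inv z" using z y by simp
  finally show ?thesis .
qed

lemma commutes_int_pow:
  assumes z: "z \<in> carrier G" and y: "y \<in> carrier G" and c: "z \<otimes> y = y \<otimes> z"
  shows "z [^] (i::int) \<otimes> y = y \<otimes> z [^] i"
proof (cases i rule: int_cases)
  case (nonneg m)
  then show ?thesis using group_commutes_pow[OF c z y] by (simp add: int_pow_int)
next
  case (neg m)
  have "z [^] Suc m \<otimes> y = y \<otimes> z [^] Suc m" by (rule group_commutes_pow[OF c z y])
  then have "inv (z [^] Suc m) \<otimes> y = y \<otimes> inv (z [^] Suc m)"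
    by (intro commutes_inv) (use z y in auto)
  then show ?thesis unfolding neg using z by (simp add: int_pow_neg_int del: of_nat_Suc)
qed

lemma pair_merge0:
  assumes x: "xg \<in> carrier G" and y: "yg \<in> carrier G"
  shows "Pg G xg yg [(a, 0), (a', b')] = Pg G xg yg [(a + a', b')]"
proof -
  have "Pg G xg yg [(a, 0), (a', b')] = xg [^] a \<otimes> (yg \<otimes> inv yg) \<otimes> xg [^] a' \<otimes> yg \<otimes> xg [^] b' \<otimes> inv yg"
    using x y by (simp add: m_assoc)
  also have "\<dots> = xg [^] (a + a') \<otimes> yg \<otimes> xg [^] b' \<otimes> inv yg"
    using x y by (simp add: int_pow_mult m_assoc)
  finally show ?thesis using x y by simp
qed

lemma pair_merge1:
  assumes x: "xg \<in> carrier G" and y: "yg \<in> carrier G"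
  shows "Pg G xg yg [(a, b), (0, b')] = Pg G xg yg [(a, b + b')]"
proof -
  have "Pg G xg yg [(a, b), (0, b')] = xg [^] a \<otimes> yg \<otimes> xg [^] b \<otimes> (inv yg \<otimes> yg) \<otimes> xg [^] b' \<otimes> inv yg"
    using x y by (simp add: m_assoc)
  also have "\<dots> = xg [^] a \<otimes> yg \<otimes> xg [^] (b + b') \<otimes> inv yg"
    using x y by (simp add: int_pow_mult m_assoc)
  finally show ?thesis using x y by simp
qed

lemma Pg_mid:
  assumes x: "xg \<in> carrier G" and y: "yg \<in> carrier G"
    and e: "Pg G xg yg M = Pg G xg yg M'"
  shows "Pg G xg yg (A @ M @ B) = Pg G xg yg (A @ M' @ B)"
  using x y e by (simp add: Pg_append)


lemma NF_step:
  assumes x: "xg \<in> carrier G" and y: "yg \<in> carrier G" and rel: "xg [^] (int n) = yg \<otimes> yg"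
    and s: "s \<in> {xg, inv xg, yg, inv yg}"
  shows "\<exists>L' c' e'. NFe G xg yg L c e \<otimes> s = NFe G xg yg L' c' e'"
proof -
  let ?P = "Pg G xg yg L"
  have P: "?P \<in> carrier G" using x y by simp
  have xc: "xg [^] c \<in> carrier G" for c :: int using x by simp
  have xpow_add: "xg [^] (a::int) \<otimes> xg [^] b = xg [^] (a + b)" for a b using x by (simp add: int_pow_mult)
  have x1: "xg [^] (1::int) = xg" using x by simp
  have xm1: "xg [^] (-1::int) = inv xg" using x by (simp add: int_pow_neg)
  have invy: "xg [^] (- int n) \<otimes> yg = inv yg"
  proof -
    have "xg [^] (- int n) = inv (yg \<otimes> yg)" using x by (simp add: int_pow_neg rel)
    also have "\<dots> = inv yg \<otimes> inv yg" using y by (simp add: inv_mult_group)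
    finally show ?thesis using y by (simp add: m_assoc)
  qed
  consider "s = xg" | "s = inv xg" | "s = yg" | "s = inv yg" using s by blast
  then show ?thesis
  proof cases
    case 1
    show ?thesis
    proof (cases e)
      case True
      have "NFe G xg yg L c e \<otimes> s = NFe G xg yg (L @ [(c, 1)]) 0 True"
        unfolding NFe_def using True 1 x y P by (simp add: Pg_append m_assoc x1)
      then show ?thesis by blast
    next
      case False
      have "NFe G xg yg L c e \<otimes> s = NFe G xg yg L (c + 1) False"
        unfolding NFe_def using False 1 x y P by (simp add: m_assoc xpow_add[of c 1, symmetric] x1)
      then show ?thesis by blast
    qed
  next
    case 2
    show ?thesis
    proof (cases e)
      case True
      have "NFe G xg yg L c e \<otimes> s = NFe G xg yg (L @ [(c, -1)]) 0 True"
        unfolding NFe_def using True 2 x y P by (simp add: Pg_append m_assoc xm1)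
      then show ?thesis by blast
    next
      case False
      have "NFe G xg yg L c e \<otimes> s = NFe G xg yg L (c - 1) False"
      proof -
        have "xg [^] c \<otimes> inv xg = xg [^] (c - 1)" using xpow_add[of c "-1"] xm1 by simp
        then show ?thesis unfolding NFe_def using False 2 x y P by (simp add: m_assoc)
      qed
      then show ?thesis by blast
    qed
  next
    case 3
    show ?thesis
    proof (cases e)
      case True
      have "NFe G xg yg L c e \<otimes> s = NFe G xg yg L (c + int n) False"
        unfolding NFe_def using True 3 x y P by (simp add: m_assoc xpow_add[of c "int n", symmetric] rel)
      then show ?thesis by blast
    next
      case False
      have "NFe G xg yg L c e \<otimes> s = NFe G xg yg L c True"
        unfolding NFe_def using False 3 x y P by (simp add: m_assoc)
      then show ?thesis by blast
    qed
  next
    case 4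
    show ?thesis
    proof (cases e)
      case True
      have "NFe G xg yg L c e \<otimes> s = NFe G xg yg L c False"
        unfolding NFe_def using True 4 x y P by (simp add: m_assoc)
      then show ?thesis by blast
    next
      case False
      have "NFe G xg yg L c e \<otimes> s = NFe G xg yg L (c - int n) True"
      proof -
        have "xg [^] (c - int n) \<otimes> yg = xg [^] c \<otimes> (xg [^] (- int n) \<otimes> yg)"
          using xpow_add[of c "- int n"] x y by (simp add: m_assoc[symmetric])
        then have "xg [^] c \<otimes> inv yg = xg [^] (c - int n) \<otimes> yg" by (simp add: invy)
        then show ?thesis unfolding NFe_def using False 4 x y P by (simp add: m_assoc)
      qed
      then show ?thesis by blast
    qed
  qed
qed

lemma NF_one: "xg \<in> carrier G \<Longrightarrow> yg \<in> carrier G \<Longrightarrow> \<one> = NFe G xg yg [] 0 False"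
  by (simp add: NFe_def)


lemma conj_mult:
  assumes "h1 \<in> carrier G" "h2 \<in> carrier G" "g \<in> carrier G"
  shows "(h2 \<otimes> h1) \<otimes> g \<otimes> inv (h2 \<otimes> h1) = h2 \<otimes> (h1 \<otimes> g \<otimes> inv h1) \<otimes> inv h2"
  using assms by (simp add: inv_mult_group m_assoc)

lemma shift_pair:
  assumes x: "xg \<in> carrier G" and y: "yg \<in> carrier G" and rel: "xg [^] (int n) = yg \<otimes> yg"
  shows "Pg G xg yg ((a - int n * t, b + int n * t) # L) = Pg G xg yg ((a, b) # L)"
proof -
  let ?z = "xg [^] (int n * t)"
  have z: "?z \<in> carrier G" using x by simp
  have xn: "xg [^] (int n) \<otimes> yg = yg \<otimes> xg [^] (int n)" using y by (simp add: rel m_assoc)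
  have zy: "?z \<otimes> yg = yg \<otimes> ?z"
    using commutes_int_pow[OF int_pow_closed[OF x] y xn, of t] x by (simp add: int_pow_pow)
  have e1: "xg [^] (b + int n * t) = ?z \<otimes> xg [^] b" using x by (simp add: int_pow_mult[symmetric] add.commute)
  have e2: "xg [^] (a - int n * t) \<otimes> ?z = xg [^] a" using x by (simp add: int_pow_mult[symmetric])
  have "xg [^] (a - int n * t) \<otimes> yg \<otimes> xg [^] (b + int n * t)
      = xg [^] (a - int n * t) \<otimes> (yg \<otimes> ?z) \<otimes> xg [^] b"
    using x y z by (simp add: e1 m_assoc)
  also have "\<dots> = (xg [^] (a - int n * t) \<otimes> ?z) \<otimes> yg \<otimes> xg [^] b"
    using x y z by (simp add: zy[symmetric] m_assoc)
  also have "\<dots> = xg [^] a \<otimes> yg \<otimes> xg [^] b" by (simp add: e2)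
  finally show ?thesis by simp
qed

definition good :: "(int \<times> int) list \<Rightarrow> bool" where
  "good L \<longleftrightarrow> L \<noteq> [] \<and> (\<forall>i < length L - 1. fst (L ! i) \<noteq> 0 \<and> snd (L ! i) \<noteq> 0)"

lemma bad_cases:
  assumes "L \<noteq> []" "\<not> good L"
  obtains (snd0) A a a' b' B where "L = A @ (a, 0) # (a', b') # B"
    | (fst0) A a b b' B where "L = A @ (a, b) # (0, b') # B"
    | (hd0) b M where "L = (0, b) # M" "M \<noteq> []"
proof -
  from assms obtain i where i: "i < length L - 1" and z: "fst (L ! i) = 0 \<or> snd (L ! i) = 0"
    unfolding good_def by blast
  have dec: "L = take i L @ L ! i # L ! Suc i # drop (Suc (Suc i)) L"
    using i by (metis Cons_nth_drop_Suc Suc_lessD id_take_nth_drop less_diff_conv add.commute plus_1_eq_Suc)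
  show thesis
  proof (cases "snd (L ! i) = 0")
    case True
    then show thesis using dec snd0[of "take i L" "fst (L ! i)" "fst (L ! Suc i)" "snd (L ! Suc i)" "drop (Suc (Suc i)) L"]
      by (metis prod.collapse)
  next
    case False
    with z have f: "fst (L ! i) = 0" by simp
    show thesis
    proof (cases i)
      case 0
      then show thesis using dec f hd0[of "snd (L ! 0)" "L ! Suc 0 # drop (Suc (Suc 0)) L"]
        by (metis append_Nil list.discI prod.collapse take_0)
    next
      case (Suc j)
      have dec2: "L = take j L @ L ! j # L ! Suc j # drop (Suc (Suc j)) L"
        using i Suc by (metis Cons_nth_drop_Suc Suc_lessD id_take_nth_drop less_diff_conv add.commute plus_1_eq_Suc)
      then show thesis using f Suc fst0[of "take j L" "fst (L ! j)" "snd (L ! j)" "snd (L ! Suc j)" "drop (Suc (Suc j)) L"]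
        by (metis prod.collapse)
    qed
  qed
qed

lemma elim_zeros:
  assumes x: "xg \<in> carrier G" and y: "yg \<in> carrier G"
  shows "L \<noteq> [] \<Longrightarrow> \<exists>h\<in>carrier G. \<exists>L'. good L' \<and> sa L' = sa L \<and> sb L' = sb L \<and>
            h \<otimes> Pg G xg yg L \<otimes> inv h = Pg G xg yg L'"
proof (induction "length L" arbitrary: L rule: less_induct)
  case less
  show ?case
  proof (cases "good L")
    case True
    then show ?thesis using x y by (intro bexI[of _ \<one>]) auto
  next
    case False
    show ?thesis
    proof (rule bad_cases[OF less.prems False])
      fix A a a' b' B assume snd0: "L = A @ (a, 0) # (a', b') # B"
      let ?L1 = "A @ (a + a', b') # B"
      have "Pg G xg yg L = Pg G xg yg ?L1"
        using Pg_mid[OF x y pair_merge0[OF x y, of a a' b'], of A B] snd0 by simp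
      moreover have "length ?L1 < length L" "?L1 \<noteq> []" "sa ?L1 = sa L" "sb ?L1 = sb L" using snd0 by auto
      ultimately show ?thesis using less.hyps[of ?L1] by auto
    next
      fix A a b b' B assume fst0: "L = A @ (a, b) # (0, b') # B"
      let ?L1 = "A @ (a, b + b') # B"
      have "Pg G xg yg L = Pg G xg yg ?L1"
        using Pg_mid[OF x y pair_merge1[OF x y, of a b b'], of A B] fst0 by simp
      moreover have "length ?L1 < length L" "?L1 \<noteq> []" "sa ?L1 = sa L" "sb ?L1 = sb L" using fst0 by auto
      ultimately show ?thesis using less.hyps[of ?L1] by auto
    next
      fix b M assume hd0: "L = (0, b) # M" "M \<noteq> []"
      obtain M' a' b' where M: "M = M' @ [(a', b')]" using hd0(2) by (metis rev_exhaust prod.collapse)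
      let ?p = "Pg G xg yg [(0, b)]"
      let ?h0 = "inv ?p"
      let ?L1 = "M' @ [(a', b' + b)]"
      have p: "?p \<in> carrier G" using x y by simp
      have PM: "Pg G xg yg M \<in> carrier G" using x y by simp
      have "?h0 \<otimes> Pg G xg yg L \<otimes> inv ?h0 = Pg G xg yg M \<otimes> ?p"
      proof -
        have "Pg G xg yg L = ?p \<otimes> Pg G xg yg M" using hd0(1) x y by (simp add: m_assoc)
        then show ?thesis using p PM by (simp add: m_assoc)
      qed
      also have "\<dots> = Pg G xg yg (M' @ [(a', b'), (0, b)])" using x y M by (simp add: Pg_append m_assoc)
      also have "\<dots> = Pg G xg yg ?L1"
        using Pg_mid[OF x y pair_merge1[OF x y, of a' b' b], of M' "[]"] by simp
      finally have c0: "?h0 \<otimes> Pg G xg yg L \<otimes> inv ?h0 = Pg G xg yg ?L1" .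
      have "length ?L1 < length L" "?L1 \<noteq> []" "sa ?L1 = sa L" "sb ?L1 = sb L"
        using hd0 M by auto
      with less.hyps[of ?L1] obtain h1 L' where h1: "h1 \<in> carrier G" "good L'" "sa L' = sa L" "sb L' = sb L"
        "h1 \<otimes> Pg G xg yg ?L1 \<otimes> inv h1 = Pg G xg yg L'" by auto
      have "(h1 \<otimes> ?h0) \<otimes> Pg G xg yg L \<otimes> inv (h1 \<otimes> ?h0) = Pg G xg yg L'"
        using conj_mult[OF inv_closed[OF p] h1(1), of "Pg G xg yg L"] x y c0 h1(5) by simp
      moreover have "h1 \<otimes> ?h0 \<in> carrier G" using h1 p by simp
      ultimately show ?thesis using h1 by blast
    qed
  qed
qed

lemma good_zip:
  assumes g: "good L" and a: "sa L = 1" and b: "sb L = 1"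
  shows "\<exists>ns ms. length ns = length ms \<and> (\<forall>i<length ns. ns ! i \<noteq> 0 \<and> ms ! i \<noteq> 0) \<and>
     L = zip (ns @ [1 - sum_list ns]) (ms @ [1 - sum_list ms])"
proof -
  have ne: "L \<noteq> []" using g by (simp add: good_def)
  define B where "B = butlast L"
  obtain p q where pq: "last L = (p, q)" by (cases "last L")
  have L: "L = B @ [(p, q)]" using append_butlast_last_id[OF ne] pq unfolding B_def by simp
  have p: "p = 1 - sum_list (map fst B)" using a L by (simp add: sa_def)
  have q: "q = 1 - sum_list (map snd B)" using b L by (simp add: sb_def)
  have nz: "\<forall>i<length (map fst B). map fst B ! i \<noteq> 0 \<and> map snd B ! i \<noteq> 0"
    using g unfolding good_def B_def by (auto simp: nth_butlast)
  have "zip (map fst B @ [p]) (map snd B @ [q]) = L"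
    using L by (simp add: zip_map_fst_snd)
  then show ?thesis using nz p q by (intro exI[of _ "map fst B"] exI[of _ "map snd B"]) auto
qed

lemma final_abs:
  assumes x: "xg \<in> carrier G" and y: "yg \<in> carrier G" and rel: "xg [^] (int n) = yg \<otimes> yg"
    and n: "n \<ge> 2" and s1: "sa L + sb L + c = 2" and s2: "(sa L - sb L + c) mod (2 * int n) = 0"
  shows "\<exists>h\<in>carrier G. \<exists>ns ms. length ns = length ms \<and> (\<forall>i<length ns. ns ! i \<noteq> 0 \<and> ms ! i \<noteq> 0) \<and>
     h \<otimes> NFe G xg yg L c False \<otimes> inv h = Pg G xg yg (zip (ns @ [1 - sum_list ns]) (ms @ [1 - sum_list ms]))"
proof -
  have "L \<noteq> []"
  proof
    assume "L = []"
    then have "c = 2" using s1 by simp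
    moreover have "(2::int) mod (2 * int n) = 2" using n by simp
    ultimately show False using s2 \<open>L = []\<close> by simp
  qed
  then obtain a b L' where L: "L = (a, b) # L'" by (metis list.exhaust prod.collapse)
  let ?h1 = "xg [^] c"
  have h1: "?h1 \<in> carrier G" using x by simp
  have c1: "?h1 \<otimes> NFe G xg yg L c False \<otimes> inv ?h1 = Pg G xg yg ((a + c, b) # L')"
  proof -
    have "?h1 \<otimes> NFe G xg yg L c False \<otimes> inv ?h1 = ?h1 \<otimes> Pg G xg yg L"
      unfolding NFe_def using x y h1 by (simp add: m_assoc)
    also have "\<dots> = Pg G xg yg ((a + c, b) # L')"
      unfolding L using x y by (simp add: m_assoc[symmetric] int_pow_mult[symmetric] add.commute)
    finally show ?thesis .
  qed
  from s2 obtain t where t: "sa L - sb L + c = 2 * int n * t"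
    by (metis dvd_def mod_0_imp_dvd)
  let ?L2 = "(a + c - int n * t, b + int n * t) # L'"
  have c2: "Pg G xg yg ?L2 = Pg G xg yg ((a + c, b) # L')" by (rule shift_pair[OF x y rel])
  have sums: "sa ?L2 = 1" "sb ?L2 = 1" using s1 t L by (simp_all add: algebra_simps)
  obtain h2 L3 where h2: "h2 \<in> carrier G" "good L3" "sa L3 = 1" "sb L3 = 1"
      "h2 \<otimes> Pg G xg yg ?L2 \<otimes> inv h2 = Pg G xg yg L3"
    using elim_zeros[OF x y, of ?L2] sums by auto
  obtain ns ms where nm: "length ns = length ms" "\<forall>i<length ns. ns ! i \<noteq> 0 \<and> ms ! i \<noteq> 0"
      "L3 = zip (ns @ [1 - sum_list ns]) (ms @ [1 - sum_list ms])"
    using good_zip[OF h2(2) h2(3) h2(4)] by blast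
  have NF: "NFe G xg yg L c False \<in> carrier G" unfolding NFe_def using x y by simp
  have "(h2 \<otimes> ?h1) \<otimes> NFe G xg yg L c False \<otimes> inv (h2 \<otimes> ?h1) = Pg G xg yg L3"
    using conj_mult[OF h1 h2(1) NF] c1 c2 h2(5) by simp
  moreover have "h2 \<otimes> ?h1 \<in> carrier G" using h1 h2 by simp
  ultimately show ?thesis using nm by blast
qed
end


lemma hom_Pg:
  assumes H: "group H" and f: "f \<in> hom FG H"
  shows "f (Pg FG gx gy L) = Pg H (f gx) (f gy) L"
proof -
  interpret fh: group_hom FG H f
    using H f group_FG by (simp add: group_hom_def group_hom_axioms_def)
  show ?thesis
  proof (induction L)
    case Nil then show ?case by simp
  next
    case (Cons p L)
    obtain a b where p: "p = (a, b)" by (cases p)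
    show ?case using Cons by (simp add: p fh.hom_int_pow)
  qed
qed

lemma hom_NFe:
  assumes H: "group H" and f: "f \<in> hom FG H"
  shows "f (NFe FG gx gy L c e) = NFe H (f gx) (f gy) L c e"
proof -
  interpret fh: group_hom FG H f
    using H f group_FG by (simp add: group_hom_def group_hom_axioms_def)
  show ?thesis unfolding NFe_def using hom_Pg[OF H f] by (simp add: fh.hom_int_pow)
qed

lemma NF_rep:
  assumes H: "group H" and f: "f \<in> hom FG H"
    and rel: "f gx [^]\<^bsub>H\<^esub> (int n) = f gy \<otimes>\<^bsub>H\<^esub> f gy"
  shows "w \<in> carrier FG \<Longrightarrow> \<exists>L c e. f w = NFe H (f gx) (f gy) L c e"
proof (induction w rule: rev_induct)
  interpret fh: group_hom FG H f
    using H f group_FG by (simp add: group_hom_def group_hom_axioms_def)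
  case Nil
  have "f [] = \<one>\<^bsub>H\<^esub>" using fh.hom_one by (simp add: one_FG)
  moreover have "\<one>\<^bsub>H\<^esub> = NFe H (f gx) (f gy) [] 0 False"
    by (rule group.NF_one[OF H]) simp_all
  ultimately show ?case by auto
next
  interpret fh: group_hom FG H f
    using H f group_FG by (simp add: group_hom_def group_hom_axioms_def)
  case (snoc a u)
  have u: "u \<in> carrier FG" using snoc.prems by (simp add: carrier_FG reduced_snoc)
  have a: "[a] \<in> carrier FG" by (simp add: carrier_FG)
  have ua: "u @ [a] = u \<otimes>\<^bsub>FG\<^esub> [a]"
    using snoc.prems by (simp add: mult_FG carrier_FG red_reduced)
  obtain L c e where IH: "f u = NFe H (f gx) (f gy) L c e" using snoc.IH[OF u] by blast
  have s: "f [a] \<in> {f gx, inv\<^bsub>H\<^esub> f gx, f gy, inv\<^bsub>H\<^esub> f gy}"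
    using letter_cases[of a] by (auto simp: fh.hom_inv)
  have "f (u @ [a]) = NFe H (f gx) (f gy) L c e \<otimes>\<^bsub>H\<^esub> f [a]"
    unfolding ua using u a IH by simp
  then show ?case using group.NF_step[OF H _ _ rel s] by simp
qed

lemma phi_xpow: "phi n (xpow a) = 2 * a"
  by (simp add: xpow_def phi_def phil_def sum_list_replicate)

lemma phi_NFe: "phi n (NFe FG gx gy L c e) = 2 * (sa L + sb L + c) + (if e then int n else 0)"
proof -
  have P: "phi n (Pg FG gx gy L) = 2 * (sa L + sb L)"
  proof (induction L)
    case Nil then show ?case by (simp add: one_FG)
  next
    case (Cons p L)
    obtain a b where p: "p = (a, b)" by (cases p)
    show ?case using Cons
      by (simp add: p phi_mult phi_inv gx_pow_int phi_xpow xpow_carrier;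
          simp add: gy_def phil_def algebra_simps)
  qed
  show ?thesis unfolding NFe_def
    by (simp add: phi_mult P gx_pow_int phi_xpow xpow_carrier;
        simp add: gy_def phil_def one_FG)
qed

lemma Ev_NFe:
  assumes n: "n \<ge> 1"
  shows "Ev n (NFe FG gx gy L c e) = ((sa L - sb L + c) mod (2 * int n), e)"
proof -
  have ev_gy: "Ev n gy = (0, True)" using n by (simp add: gy_def Ql_def Qm_def)
  have ev_igy: "Ev n (inv\<^bsub>FG\<^esub> gy) = (int n, True)" using n by (simp add: gy_inv Ql_def Qm_def)
  have P: "Ev n (Pg FG gx gy L) = ((sa L - sb L) mod (2 * int n), False)"
  proof (induction L)
    case Nil then show ?case by (simp add: one_FG)
  next
    case (Cons p L)
    obtain a b where p: "p = (a, b)" by (cases p)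
    let ?N = "2 * int n"
    have "Ev n (Pg FG gx gy (p # L)) = Qm n (a mod ?N, False) (Qm n (0, True) (Qm n (b mod ?N, False)
           (Qm n (int n, True) (Ev n (Pg FG gx gy L)))))"
      by (simp add: p Ev_mult[OF n] gx_pow_int Ev_xpow[OF n] ev_gy ev_igy Qm_assoc xpow_carrier)
    also have "\<dots> = ((sa (p # L) - sb (p # L)) mod ?N, False)"
      unfolding Cons p
      by (simp add: Qm_def mod_simps; rule mod_eqI; simp add: algebra_simps minus_div_mult_eq_mod[symmetric])
    finally show ?case .
  qed
  show ?thesis unfolding NFe_def
    by (simp add: Ev_mult[OF n] P gx_pow_int Ev_xpow[OF n] ev_gy one_FG;
        simp add: Qm_def mod_simps algebra_simps;
        rule mod_eqI; simp add: algebra_simps minus_div_mult_eq_mod[symmetric])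
qed

lemma N0_sub_kernel:
  assumes n: "n \<ge> 1"
  shows "normal_closure FG {rel0 n} \<subseteq> kernel FG (Qgrp n) (Ev n)"
  by (rule nc_least[OF Ev_normal[OF n]]) (simp add: kernel_def Ev_rel0[OF n] rel0_carrier)

lemma N0_sub_Dset: "normal_closure FG {rel0 n} \<subseteq> Dset n 0"
  by (rule nc_least[OF Dset_normal]) (simp add: Dset_def phi_rel0 rel0_carrier)

theorem theorem3p1:
  fixes n :: nat and R :: word
  assumes "n \<ge> 2"
    and "R \<in> carrier FG"
    and "regular n R"
  shows "\<exists>(k::nat) (ns::int list) (ms::int list). length ns = k \<and> length ms = k \<and>
           (\<forall>i<k. ns ! i \<noteq> 0 \<and> ms ! i \<noteq> 0) \<and>
           [rel0 n, R] \<simeq>\<^sub>Q Pn n ns ms"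
proof -
  note n2 = assms(1) and R = assms(2)
  have n1: "n \<ge> 1" using n2 by simp
  have Rin: "R \<in> normal_closure FG {rel0 n, qrel}" and qin: "qrel \<in> normal_closure FG {rel0 n, R}"
    using regular_facts[OF assms(3) R] by auto
  have phiR: "phi n R = 4 \<or> phi n R = -4" by (rule phi_R[OF Rin qin R])
  define R1 where "R1 = (if phi n R = 4 then R else inv\<^bsub>FG\<^esub> R)"
  have R1c: "R1 \<in> carrier FG" using R by (simp add: R1_def)
  have Q1: "[rel0 n, R] \<simeq>\<^sub>Q [rel0 n, R1]"
    using Qe_refl Qe_inv1'[OF R] by (simp add: R1_def)
  have phi1: "phi n R1 = 4" using phiR R by (auto simp: R1_def phi_inv)
  have nQ: "normal_closure FG {rel0 n, qrel} \<lhd> FG"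
    by (rule normalFG) (simp add: rel0_carrier qrel_carrier)
  have R1in: "R1 \<in> normal_closure FG {rel0 n, qrel}"
    using Rin subgroup.m_inv_closed[OF normal_imp_subgroup[OF nQ] Rin] by (simp add: R1_def)
  have ev1: "Ev n R1 = (0, False)" by (rule Ev_R[OF n1 R1in n2])
  define N0 where "N0 = normal_closure FG {rel0 n}"
  have nN0: "N0 \<lhd> FG" unfolding N0_def by (rule normalFG) (simp add: rel0_carrier)
  define G' where "G' = FG Mod N0"
  have GQ: "group G'" unfolding G'_def by (rule normal.factorgroup_is_group[OF nN0])
  define pi where "pi = (\<lambda>w. N0 #>\<^bsub>FG\<^esub> w)"
  have piH: "pi \<in> hom FG G'" unfolding pi_def G'_def by (rule normal.r_coset_hom_Mod[OF nN0])
  interpret GG: group G' by (rule GQ)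
  interpret P: group_hom FG G' pi
    using GQ piH group_FG by (simp add: group_hom_def group_hom_axioms_def)
  have pi_eq: "pi w = pi v \<Longrightarrow> w \<in> carrier FG \<Longrightarrow> v \<in> carrier FG \<Longrightarrow> \<exists>k\<in>N0. w = k \<otimes>\<^bsub>FG\<^esub> v" for w v
  proof -
    assume e: "pi w = pi v" and w: "w \<in> carrier FG" and v: "v \<in> carrier FG"
    have "w \<in> N0 #>\<^bsub>FG\<^esub> w" by (rule F.rcos_self[OF w normal_imp_subgroup[OF nN0]])
    then have "w \<in> N0 #>\<^bsub>FG\<^esub> v" using e by (simp add: pi_def)
    then show ?thesis unfolding r_coset_def by (simp only: UN_iff singleton_iff)
  qed
  have r0N: "rel0 n \<in> N0" unfolding N0_def by (rule subsetD[OF nc_sub]) simp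
  have pir0: "pi (rel0 n) = \<one>\<^bsub>G'\<^esub>"
    using rcos_eq_iff[OF nN0 rel0_carrier] r0N by (simp add: pi_def G'_def)
  let ?X = "pi gx" and ?Y = "pi gy"
  have X: "?X \<in> carrier G'" and Y: "?Y \<in> carrier G'" by simp_all
  have rel: "?X [^]\<^bsub>G'\<^esub> (int n) = ?Y \<otimes>\<^bsub>G'\<^esub> ?Y"
  proof -
    have "pi (rel0 n) = ?X [^]\<^bsub>G'\<^esub> (int n) \<otimes>\<^bsub>G'\<^esub> inv\<^bsub>G'\<^esub> (?Y \<otimes>\<^bsub>G'\<^esub> ?Y)"
      unfolding rel0_FG by (simp add: P.hom_nat_pow int_pow_int GG.inv_mult_group GG.m_assoc)
    then have e: "?X [^]\<^bsub>G'\<^esub> (int n) \<otimes>\<^bsub>G'\<^esub> inv\<^bsub>G'\<^esub> (?Y \<otimes>\<^bsub>G'\<^esub> ?Y) = \<one>\<^bsub>G'\<^esub>"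
      using pir0 by simp
    have "?X [^]\<^bsub>G'\<^esub> (int n) = ?X [^]\<^bsub>G'\<^esub> (int n) \<otimes>\<^bsub>G'\<^esub> inv\<^bsub>G'\<^esub> (?Y \<otimes>\<^bsub>G'\<^esub> ?Y) \<otimes>\<^bsub>G'\<^esub> (?Y \<otimes>\<^bsub>G'\<^esub> ?Y)"
      by (simp add: GG.m_assoc)
    also have "\<dots> = ?Y \<otimes>\<^bsub>G'\<^esub> ?Y" by (simp add: e)
    finally show ?thesis .
  qed
  obtain L c e where LR: "pi R1 = NFe G' ?X ?Y L c e"
    using NF_rep[OF GQ piH rel R1c] by blast
  define W where "W = NFe FG gx gy L c e"
  have Wc: "W \<in> carrier FG" unfolding W_def NFe_def by simp
  have piW: "pi W = pi R1" unfolding W_def hom_NFe[OF GQ piH] LR ..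
  obtain k where k: "k \<in> N0" "W = k \<otimes>\<^bsub>FG\<^esub> R1" using pi_eq[OF piW Wc R1c] by blast
  have kc: "k \<in> carrier FG" by (rule subgroup.mem_carrier[OF normal_imp_subgroup[OF nN0] k(1)])
  have evk: "Ev n k = (0, False)" using k(1) N0_sub_kernel[OF n1] unfolding N0_def kernel_def by auto
  have phik: "phi n k = 0" using k(1) N0_sub_Dset unfolding N0_def Dset_def by auto
  have evW: "Ev n W = (0, False)" using k(2) Ev_mult[OF n1, of k R1] evk ev1 by (simp add: Qm_def)
  have phiW: "phi n W = 4" using k(2) phi_mult[of n k R1] phik phi1 by simp
  have e0: "e = False" and m0: "(sa L - sb L + c) mod (2 * int n) = 0"
    using evW Ev_NFe[OF n1, of L c e] unfolding W_def by auto
  have s2: "sa L + sb L + c = 2" using phiW phi_NFe[of n L c e] e0 unfolding W_def by simp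
  obtain h' ns ms where h': "h' \<in> carrier G'" "length ns = length ms"
      "\<forall>i<length ns. ns ! i \<noteq> 0 \<and> ms ! i \<noteq> 0"
      "h' \<otimes>\<^bsub>G'\<^esub> NFe G' ?X ?Y L c False \<otimes>\<^bsub>G'\<^esub> inv\<^bsub>G'\<^esub> h'
        = Pg G' ?X ?Y (zip (ns @ [1 - sum_list ns]) (ms @ [1 - sum_list ms]))"
    using GG.final_abs[OF X Y rel n2 s2 m0] by blast
  have "h' \<in> pi ` carrier FG" using h'(1) unfolding G'_def pi_def carrier_FactGroup .
  then obtain h where h: "h \<in> carrier FG" "h' = pi h" by blast
  define z where "z = h \<otimes>\<^bsub>FG\<^esub> R1 \<otimes>\<^bsub>FG\<^esub> inv\<^bsub>FG\<^esub> h"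
  define Pr where "Pr = Pn_rel ns ms"
  have zc: "z \<in> carrier FG" using h R1c by (simp add: z_def)
  have Prc: "Pr \<in> carrier FG" by (simp add: Pr_def Pn_rel_carrier)
  have "pi z = h' \<otimes>\<^bsub>G'\<^esub> NFe G' ?X ?Y L c False \<otimes>\<^bsub>G'\<^esub> inv\<^bsub>G'\<^esub> h'"
    using h R1c LR e0 by (simp add: z_def)
  also have "\<dots> = pi Pr"
    using h'(4) by (simp add: Pr_def Pn_rel_Pg hom_Pg[OF GQ piH])
  finally have "pi Pr = pi z" by simp
  then obtain k2 where k2: "k2 \<in> N0" "Pr = k2 \<otimes>\<^bsub>FG\<^esub> z" using pi_eq[OF _ Prc zc] by blast
  define c0 where "c0 = inv\<^bsub>FG\<^esub> z \<otimes>\<^bsub>FG\<^esub> k2 \<otimes>\<^bsub>FG\<^esub> z"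
  have c0N: "c0 \<in> normal_closure FG {rel0 n}"
    unfolding c0_def using normal.inv_op_closed1[OF nN0 zc k2(1)] by (simp add: N0_def)
  have k2c: "k2 \<in> carrier FG" by (rule subgroup.mem_carrier[OF normal_imp_subgroup[OF nN0] k2(1)])
  have Pz: "Pr = z \<otimes>\<^bsub>FG\<^esub> c0"
    using k2(2) zc k2c by (simp add: c0_def F.m_assoc[symmetric])
  have Q2: "[rel0 n, R1] \<simeq>\<^sub>Q [rel0 n, z]" unfolding z_def by (rule Qe_conj1[OF h(1)])
  have Q3: "[rel0 n, z] \<simeq>\<^sub>Q [rel0 n, Pr]" unfolding Pz by (rule Qe_mod[OF rel0_carrier zc c0N])
  have "[rel0 n, R] \<simeq>\<^sub>Q Pn n ns ms"
    using Qe_trans[OF Qe_trans[OF Q1 Q2] Q3] by (simp add: Pn_def Pr_def)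
  then show ?thesis
    by (intro exI[of _ "length ns"] exI[of _ ns] exI[of _ ms]) (use h'(2,3) in simp)
qed


end
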